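(* Let $K=\mathbb{Q}(\rho)$, where $\rho$ is a root of $x^3-ax^2-(a+3)x-1$ with $a\equiv3$ or $21\pmod{27}$, $a>12$ and $\frac{a^2+3a+9}{27}$ square-free. Put $g_1=1$, $g_2=\rho$, $g_3=\frac{1+\rho+\rho^2}{3}$ and, for integers $v,r$, \[\alpha(v,r)=-(2v+1)g_1-(v(a+3)+r+1)g_2+(3v+2)g_3.\] Then: \begin{enumerate} \item $N(\alpha(v,r))<N(\alpha(v+1,r))$ for all $0\leq v\leq\frac{a-3}{9}-1$ and $\frac{a}{3}+2+v\leq r\leq\frac{2a}{3}-2v-3$; \item $N(\alpha(v,\frac{a}{3}+1+v))<N(\alpha(v+1,\frac{a}{3}+1+v+1))$ for all $0\leq v\leq\frac{a-3}{9}-1$; \item $N(\alpha(v,\frac{2a}{3}-2v-1))<N(\alpha(v+1,\frac{2a}{3}-2(v+1)-1))$ for all $0\leq v\leq\frac{a-3}{9}-2$; \item $N(\alpha(v,\frac{2a}{3}-2v-2))<N(\alpha(v+1,\frac{2a}{3}-2(v+1)-2))$ for all $0\leq v\leq\frac{a-3}{9}-2$. \end{enumerate}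
   Context: $N$ denotes the norm from $K$ to $\mathbb{Q}$. Note that the hypotheses imply $a\equiv 3\pmod 9$, so $\frac{a}{3}$ and $\frac{a-3}{9}$ are integers. *)

theory Defs
  imports Complex_Main "HOL-Computational_Algebra.Squarefree"
begin

definition cubic :: "int \<Rightarrow> complex \<Rightarrow> complex" where
  "cubic a x = x^3 - of_int a * x^2 - (of_int a + 3) * x - 1"

text \<open>An element c0*g1 + c1*g2 + c2*g3 of K, with g1 = 1, g2 = rho, g3 = (1+rho+rho^2)/3,
  evaluated at a conjugate x of rho.\<close>
definition elemK :: "rat \<Rightarrow> rat \<Rightarrow> rat \<Rightarrow> complex \<Rightarrow> complex" where
  "elemK c0 c1 c2 x = of_rat c0 + of_rat c1 * x + of_rat c2 * (1 + x + x^2) / 3"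

text \<open>Norm from K = Q(rho) to Q: product over the (three distinct) conjugates of rho,
  i.e. the complex roots of the cubic. The product is rational, hence real.\<close>
definition normK :: "int \<Rightarrow> rat \<Rightarrow> rat \<Rightarrow> rat \<Rightarrow> real" where
  "normK a c0 c1 c2 = Re (\<Prod>x\<in>{x. cubic a x = 0}. elemK c0 c1 c2 x)"

definition alpha :: "int \<Rightarrow> int \<Rightarrow> int \<Rightarrow> rat \<times> rat \<times> rat" where
  "alpha a v r = (of_int (-(2*v+1)), of_int (-(v*(a+3)+r+1)), of_int (3*v+2))"

definition N_alpha :: "int \<Rightarrow> int \<Rightarrow> int \<Rightarrow> real" where
  "N_alpha a v r = (case alpha a v r of (c0, c1, c2) \<Rightarrow> normK a c0 c1 c2)"

end

theory Submission
  imports Defs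
begin

lemma cont_cub: "continuous_on S (\<lambda>x::real. x^3 - b*x^2 - (b+3)*x - 1)"
  by (intro continuous_intros)

lemma real_roots:
  fixes b :: real
  assumes "b \<ge> 0"
  obtains x1 x2 x3 :: real where "x1 \<noteq> x2" "x1 \<noteq> x3" "x2 \<noteq> x3"
    "x1+x2+x3 = b" "x1*x2+x1*x3+x2*x3 = -(b+3)" "x1*x2*x3 = 1"
    "x1^3 - b*x1^2 - (b+3)*x1 - 1 = 0"
proof -
  define f where "f = (\<lambda>x::real. x^3 - b*x^2 - (b+3)*x - 1)"
  have c: "continuous_on S f" for S unfolding f_def by (rule cont_cub)
  have "\<exists>x. -2 \<le> x \<and> x \<le> -1 \<and> f x = 0"
    by (rule IVT') (use assms c in \<open>auto simp: f_def\<close>)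
  then obtain x1 where x1: "-2 \<le> x1" "x1 \<le> -1" "f x1 = 0" by blast
  have "\<exists>x. -1 \<le> x \<and> x \<le> 0 \<and> f x = 0"
    by (rule IVT2') (use assms c in \<open>auto simp: f_def\<close>)
  then obtain x2 where x2: "-1 \<le> x2" "x2 \<le> 0" "f x2 = 0" by blast
  have fb: "f (b+2) \<ge> 0"
  proof -
    have "f (b+2) = (b+2)*(b+1) - 1" by (simp add: f_def power2_eq_square power3_eq_cube algebra_simps)
    also have "(b+2)*(b+1) \<ge> 2*1" by (rule mult_mono) (use assms in auto)
    hence "(b+2)*(b+1) - 1 \<ge> 0" by simp
    finally show ?thesis .
  qed
  have "\<exists>x. 0 \<le> x \<and> x \<le> b+2 \<and> f x = 0"
    by (rule IVT') (use assms c fb in \<open>auto simp: f_def\<close>)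
  then obtain x3 where x3: "0 \<le> x3" "x3 \<le> b+2" "f x3 = 0" by blast
  have n1: "x1 \<noteq> -1" using x1 by (auto simp: f_def)
  have n0: "x2 \<noteq> 0" using x2 by (auto simp: f_def)
  have d12: "x1 \<noteq> x2" and d13: "x1 \<noteq> x3" and d23: "x2 \<noteq> x3" using x1 x2 x3 n1 n0 by auto
  define g where "g = (\<lambda>x y::real. x^2+x*y+y^2 - b*(x+y) - (b+3))"
  have fg: "f x - f y = (x - y) * g x y" for x y
    by (simp add: f_def g_def power2_eq_square power3_eq_cube algebra_simps)
  have g12: "g x1 x2 = 0" using fg[of x1 x2] x1 x2 d12 by simp
  have g13: "g x1 x3 = 0" using fg[of x1 x3] x1 x3 d13 by simp
  have "g x1 x2 - g x1 x3 = (x2 - x3) * (x1+x2+x3-b)"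
    by (simp add: g_def power2_eq_square algebra_simps)
  hence s1: "x1+x2+x3 = b" using g12 g13 d23 by simp
  hence x3e: "x3 = b - x1 - x2" by simp
  have s2: "x1*x2+x1*x3+x2*x3 = -(b+3)"
    using g12 unfolding x3e g_def by (simp add: power2_eq_square algebra_simps)
  have "x1*x2*x3 = x1^3 - (x1+x2+x3)*x1^2 + (x1*x2+x1*x3+x2*x3)*x1"
    by (simp add: power2_eq_square power3_eq_cube algebra_simps)
  also have "\<dots> = x1^3 - b*x1^2 - (b+3)*x1" by (simp only: s1 s2)
  also have "\<dots> = 1" using x1(3) unfolding f_def by simp
  finally have s3: "x1*x2*x3 = 1" .
  show ?thesis using that d12 d13 d23 s1 s2 s3 x1(3) f_def by auto
qed

lemma of_rat_cplx: "(of_rat q :: complex) = of_real (of_rat q)"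
  by (cases q) (simp add: of_rat_rat)

definition NF :: "real \<Rightarrow> real \<Rightarrow> real \<Rightarrow> real \<Rightarrow> real \<Rightarrow> real \<Rightarrow> real" where
  "NF A B C s1 s2 s3 = C^3*s3^2 + B*C^2*s2*s3 + B^2*C*s1*s3 + B^3*s3 + A*C^2*s2^2
     - 2*A*C^2*s1*s3 - 3*A*B*C*s3 + A*B*C*s1*s2 + A*B^2*s2 - 2*A^2*C*s2 + A^2*C*s1^2
     + A^2*B*s1 + A^3"

lemma norm_sym:
  fixes A B C x1 x2 x3 :: real
  shows "(A+B*x1+C*x1^2)*(A+B*x2+C*x2^2)*(A+B*x3+C*x3^2)
     = NF A B C (x1+x2+x3) (x1*x2+x1*x3+x2*x3) (x1*x2*x3)"
  unfolding NF_def by (simp add: power2_eq_square power3_eq_cube algebra_simps)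

lemma normK_eq:
  fixes a :: int
  assumes "a \<ge> 0"
  shows "normK a c0 c1 c2 = NF (of_rat c0 + of_rat c2/3) (of_rat c1 + of_rat c2/3) (of_rat c2/3)
            (of_int a) (-(of_int a+3)) 1"
proof -
  obtain x1 x2 x3 :: real where d: "x1 \<noteq> x2" "x1 \<noteq> x3" "x2 \<noteq> x3"
    and s: "x1+x2+x3 = of_int a" "x1*x2+x1*x3+x2*x3 = -(of_int a+3)" "x1*x2*x3 = 1"
  proof -
    have "of_int a \<ge> (0::real)" using assms by simp
    from real_roots[OF this] show ?thesis using that by blast
  qed
  have fac: "cubic a z = (z - of_real x1)*(z - of_real x2)*(z - of_real x3)" for z
  proof -
    have "(z - of_real x1)*(z - of_real x2)*(z - of_real x3) = z^3 - of_real(x1+x2+x3)*z^2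
       + of_real(x1*x2+x1*x3+x2*x3)*z - of_real(x1*x2*x3)"
      by (simp add: power2_eq_square power3_eq_cube algebra_simps)
    also have "\<dots> = cubic a z" unfolding s cubic_def by (simp add: algebra_simps)
    finally show ?thesis by simp
  qed
  have S: "{x. cubic a x = 0} = {of_real x1, of_real x2, of_real x3}"
    unfolding fac by auto
  define A where "A = (of_rat c0 + of_rat c2/3 :: real)"
  define B where "B = (of_rat c1 + of_rat c2/3 :: real)"
  define C where "C = (of_rat c2/3 :: real)"
  have E: "elemK c0 c1 c2 (of_real x) = of_real (A + B*x + C*x^2)" for x
    unfolding elemK_def A_def B_def C_def of_rat_cplx
    by (simp add: power2_eq_square algebra_simps)
  have "normK a c0 c1 c2 = (A+B*x1+C*x1^2)*(A+B*x2+C*x2^2)*(A+B*x3+C*x3^2)"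
    unfolding normK_def S using d by (simp add: E del: of_real_add of_real_mult of_real_power)
  also have "\<dots> = NF A B C (of_int a) (-(of_int a+3)) 1" unfolding norm_sym s ..
  finally show ?thesis unfolding A_def B_def C_def .
qed

definition Npoly :: "real \<Rightarrow> real \<Rightarrow> real \<Rightarrow> real" where
  "Npoly a v r = (-1/3) + 1*r + (-1)*r^3 + (-1)*v + 3*v*r + (-3)*v*r^2 + 1*v^3 + (-4/9)*a + (1/3)*a*r + 1*a*r^2 + (-4/3)*a*v + 3*a*v*r + (-1)*a*v*r^2 + (-1)*a*v^2*r + (-4/27)*a^2 + (-2/9)*a^2*r + (-7/9)*a^2*v + 1*a^2*v*r + (1/3)*a^2*v^2 + (-2/9)*a^3*v"

lemma N_alpha_eq:
  assumes "a \<ge> 0"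
  shows "N_alpha a v r = Npoly (of_int a) (of_int v) (of_int r)"
  unfolding N_alpha_def alpha_def prod.case normK_eq[OF assms] of_rat_of_int_eq NF_def Npoly_def
  by (simp add: power2_eq_square power3_eq_cube field_simps)

lemma c1:
  fixes v w r :: real
  assumes "v \<ge> 0" "w \<ge> 0" "3*(v+2+w)+v+3 \<le> r" "r \<le> 6*(v+2+w)-2*v-1"
  shows "Npoly (9*(v+2+w)+3) v r < Npoly (9*(v+2+w)+3) (v+1) r"
proof -
  define L where "L = 3*(v+2+w)+v+3"
  define U where "U = 6*(v+2+w)-2*v-1"
  define D1L where "D1L = 148 + 144*v + 36*v^2 + 171*w + 144*w*v + 27*w*v^2 + 45*w^2 + 27*w^2*v"
  define D1U where "D1U = 160 + 108*v + 18*v^2 + 189*w + 72*w*v + 45*w^2"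
  have id: "(U-L)*(Npoly (9*(v+2+w)+3) (v+1) r - Npoly (9*(v+2+w)+3) v r)
     = D1L*(U-r) + D1U*(r-L) + (9*(v+2+w)+6)*(U-L)*(r-L)*(U-r)"
    unfolding L_def U_def D1L_def D1U_def Npoly_def
    by (simp add: power2_eq_square power3_eq_cube algebra_simps)
  have hL: "D1L \<ge> 148" unfolding D1L_def using assms
    by (simp add: add_nonneg_nonneg mult_nonneg_nonneg)
  have hU: "D1U \<ge> 148" unfolding D1U_def using assms
    by (simp add: add_nonneg_nonneg mult_nonneg_nonneg)
  have r1: "U - r \<ge> 0" "r - L \<ge> 0" "U - L > 0" using assms unfolding L_def U_def by auto
  have m1: "D1L*(U-r) \<ge> 148*(U-r)" using hL r1 by (intro mult_right_mono) auto
  have m2: "D1U*(r-L) \<ge> 148*(r-L)" using hU r1 by (intro mult_right_mono) auto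
  have m3: "(9*(v+2+w)+6)*(U-L)*(r-L)*(U-r) \<ge> 0" using assms r1
    by (intro mult_nonneg_nonneg) auto
  have s0: "0 < 148*(U-r) + 148*(r-L)" using r1(3) by (simp add: algebra_simps)
  have "148*(U-r) + 148*(r-L) \<le> D1L*(U-r) + D1U*(r-L)" by (rule add_mono) (fact m1, fact m2)
  with s0 have "0 < D1L*(U-r) + D1U*(r-L)" by (rule less_le_trans)
  hence "(U-L)*(Npoly (9*(v+2+w)+3) (v+1) r - Npoly (9*(v+2+w)+3) v r) > 0"
    unfolding id using m3 by (rule add_pos_nonneg)
  hence "Npoly (9*(v+2+w)+3) (v+1) r - Npoly (9*(v+2+w)+3) v r > 0"
    using r1 by (simp add: zero_less_mult_iff)
  thus ?thesis by simp
qed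

lemma c2:
  fixes v w :: real
  assumes "v \<ge> 0" "w \<ge> 0"
  shows "Npoly (9*(v+1+w)+3) v (3*(v+1+w)+2+v) < Npoly (9*(v+1+w)+3) (v+1) (3*(v+1+w)+2+v+1)"
proof -
  have id: "Npoly (9*(v+1+w)+3) (v+1) (3*(v+1+w)+2+v+1) - Npoly (9*(v+1+w)+3) v (3*(v+1+w)+2+v) = 36 + 63*v + 27*v^2 + 108*w + 162*w*v + 54*w*v^2 + 54*w^2 + 54*w^2*v"
    unfolding Npoly_def by (simp add: power2_eq_square power3_eq_cube algebra_simps)
  have "36 + 63*v + 27*v^2 + 108*w + 162*w*v + 54*w*v^2 + 54*w^2 + 54*w^2*v \<ge> 36" using assms by (simp add: add_nonneg_nonneg mult_nonneg_nonneg)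
  thus ?thesis using id by linarith
qed

lemma c3:
  fixes v w :: real
  assumes "v \<ge> 0" "w \<ge> 0"
  shows "Npoly (9*(v+2+w)+3) v (6*(v+2+w)+1-2*v) < Npoly (9*(v+2+w)+3) (v+1) (6*(v+2+w)+1-2*v-2)"
proof -
  have id: "Npoly (9*(v+2+w)+3) (v+1) (6*(v+2+w)+1-2*v-2) - Npoly (9*(v+2+w)+3) v (6*(v+2+w)+1-2*v) = 198 + 216*v + 54*v^2 + 279*w + 270*w*v + 54*w*v^2 + 81*w^2 + 54*w^2*v"
    unfolding Npoly_def by (simp add: power2_eq_square power3_eq_cube algebra_simps)
  have "198 + 216*v + 54*v^2 + 279*w + 270*w*v + 54*w*v^2 + 81*w^2 + 54*w^2*v \<ge> 198" using assms by (simp add: add_nonneg_nonneg mult_nonneg_nonneg)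
  thus ?thesis using id by linarith
qed

lemma c4:
  fixes v w :: real
  assumes "v \<ge> 0" "w \<ge> 0"
  shows "Npoly (9*(v+2+w)+3) v (6*(v+2+w)-2*v) < Npoly (9*(v+2+w)+3) (v+1) (6*(v+2+w)-2*v-2)"
proof -
  have id: "Npoly (9*(v+2+w)+3) (v+1) (6*(v+2+w)-2*v-2) - Npoly (9*(v+2+w)+3) v (6*(v+2+w)-2*v) = 162 + 135*v + 27*v^2 + 324*w + 270*w*v + 54*w*v^2 + 108*w^2 + 54*w^2*v"
    unfolding Npoly_def by (simp add: power2_eq_square power3_eq_cube algebra_simps)
  have "162 + 135*v + 27*v^2 + 324*w + 270*w*v + 54*w*v^2 + 108*w^2 + 54*w^2*v \<ge> 162" using assms by (simp add: add_nonneg_nonneg mult_nonneg_nonneg)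
  thus ?thesis using id by linarith
qed

theorem lemma7p3:
  fixes a :: int
  assumes "a mod 27 = 3 \<or> a mod 27 = 21"
    and "a > 12"
    and "squarefree ((a^2 + 3*a + 9) div 27)"
  shows "(\<forall>v r. 0 \<le> v \<and> v \<le> (a-3) div 9 - 1 \<and> a div 3 + 2 + v \<le> r \<and> r \<le> 2*a div 3 - 2*v - 3
            \<longrightarrow> N_alpha a v r < N_alpha a (v+1) r)
       \<and> (\<forall>v. 0 \<le> v \<and> v \<le> (a-3) div 9 - 1
            \<longrightarrow> N_alpha a v (a div 3 + 1 + v) < N_alpha a (v+1) (a div 3 + 1 + v + 1))
       \<and> (\<forall>v. 0 \<le> v \<and> v \<le> (a-3) div 9 - 2
            \<longrightarrow> N_alpha a v (2*a div 3 - 2*v - 1) < N_alpha a (v+1) (2*a div 3 - 2*(v+1) - 1))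
       \<and> (\<forall>v. 0 \<le> v \<and> v \<le> (a-3) div 9 - 2
            \<longrightarrow> N_alpha a v (2*a div 3 - 2*v - 2) < N_alpha a (v+1) (2*a div 3 - 2*(v+1) - 2))"
proof -
  have ak: "a = 9*((a-3) div 9) + 3" using assms(1) by presburger
  define k where "k = (a-3) div 9"
  have ak': "a = 9*k+3" using ak unfolding k_def .
  have d3: "a div 3 = 3*k+1" "2*a div 3 = 6*k+2" "(a-3) div 9 = k" unfolding ak' by simp_all
  have a0: "a \<ge> 0" using assms(2) by simp
  have ra: "real_of_int a = 9*real_of_int k + 3" unfolding ak' by simp
  have P1: "N_alpha a v r < N_alpha a (v+1) r"
    if h: "0 \<le> v" "3*k+3+v \<le> r" "r \<le> 6*k-2*v-1" for v r
  proof -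
    define w where "w = k - v - 2"
    have w0: "w \<ge> 0" using h unfolding w_def by linarith
    have kk: "real_of_int k = of_int v + 2 + of_int w" unfolding w_def by simp
    have i1: "real_of_int (3*(v+2+w)+v+3) \<le> real_of_int r" using h unfolding w_def by (simp only: of_int_le_iff) presburger
    have i2: "real_of_int r \<le> real_of_int (6*(v+2+w)-2*v-1)" using h unfolding w_def by (simp only: of_int_le_iff) presburger
    have "Npoly (9*(of_int v+2+of_int w)+3) (of_int v) (of_int r) < Npoly (9*(of_int v+2+of_int w)+3) (of_int v+1) (of_int r)"
      by (rule c1) (use h w0 i1 i2 in auto)
    thus ?thesis unfolding N_alpha_eq[OF a0] ra kk by simp
  qed
  have P2: "N_alpha a v (3*k+2+v) < N_alpha a (v+1) (3*k+2+v+1)"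
    if h: "0 \<le> v" "v \<le> k-1" for v
  proof -
    define w where "w = k - v - 1"
    have w0: "w \<ge> 0" using h unfolding w_def by linarith
    have kk: "real_of_int k = of_int v + 1 + of_int w" unfolding w_def by simp
    have "Npoly (9*(of_int v+1+of_int w)+3) (of_int v) (3*(of_int v+1+of_int w)+2+of_int v) < Npoly (9*(of_int v+1+of_int w)+3) (of_int v+1) (3*(of_int v+1+of_int w)+2+of_int v+1)"
      by (rule c2) (use h w0 in auto)
    thus ?thesis unfolding N_alpha_eq[OF a0] by (simp add: ra kk algebra_simps)
  qed
  have P3: "N_alpha a v (6*k+1-2*v) < N_alpha a (v+1) (6*k+1-2*v-2)"
    if h: "0 \<le> v" "v \<le> k-2" for v
  proof -
    define w where "w = k - v - 2"
    have w0: "w \<ge> 0" using h unfolding w_def by linarith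
    have kk: "real_of_int k = of_int v + 2 + of_int w" unfolding w_def by simp
    have "Npoly (9*(of_int v+2+of_int w)+3) (of_int v) (6*(of_int v+2+of_int w)+1-2*of_int v) < Npoly (9*(of_int v+2+of_int w)+3) (of_int v+1) (6*(of_int v+2+of_int w)+1-2*of_int v-2)"
      by (rule c3) (use h w0 in auto)
    thus ?thesis unfolding N_alpha_eq[OF a0] by (simp add: ra kk algebra_simps)
  qed
  have P4: "N_alpha a v (6*k-2*v) < N_alpha a (v+1) (6*k-2*v-2)"
    if h: "0 \<le> v" "v \<le> k-2" for v
  proof -
    define w where "w = k - v - 2"
    have w0: "w \<ge> 0" using h unfolding w_def by linarith
    have kk: "real_of_int k = of_int v + 2 + of_int w" unfolding w_def by simp
    have "Npoly (9*(of_int v+2+of_int w)+3) (of_int v) (6*(of_int v+2+of_int w)-2*of_int v) < Npoly (9*(of_int v+2+of_int w)+3) (of_int v+1) (6*(of_int v+2+of_int w)-2*of_int v-2)"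
      by (rule c4) (use h w0 in auto)
    thus ?thesis unfolding N_alpha_eq[OF a0] by (simp add: ra kk algebra_simps)
  qed
  show ?thesis unfolding d3
  proof (intro conjI allI impI)
    fix v r assume "0 \<le> v \<and> v \<le> k - 1 \<and> 3 * k + 1 + 2 + v \<le> r \<and> r \<le> 6 * k + 2 - 2 * v - 3"
    thus "N_alpha a v r < N_alpha a (v + 1) r" by (intro P1) auto
  next
    fix v assume "0 \<le> v \<and> v \<le> k - 1"
    thus "N_alpha a v (3 * k + 1 + 1 + v) < N_alpha a (v + 1) (3 * k + 1 + 1 + v + 1)"
      using P2[of v] by (simp add: add.assoc)
  next
    fix v assume hv: "0 \<le> v \<and> v \<le> k - 2"
    have e: "6 * k + 2 - 2 * v - 1 = 6*k+1-2*v" "6 * k + 2 - 2 * (v + 1) - 1 = 6*k+1-2*v-2" by simp_all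
    show "N_alpha a v (6 * k + 2 - 2 * v - 1) < N_alpha a (v + 1) (6 * k + 2 - 2 * (v + 1) - 1)"
      unfolding e using P3[of v] hv by blast
  next
    fix v assume hv: "0 \<le> v \<and> v \<le> k - 2"
    have e: "6 * k + 2 - 2 * v - 2 = 6*k-2*v" "6 * k + 2 - 2 * (v + 1) - 2 = 6*k-2*v-2" by simp_all
    show "N_alpha a v (6 * k + 2 - 2 * v - 2) < N_alpha a (v + 1) (6 * k + 2 - 2 * (v + 1) - 2)"
      unfolding e using P4[of v] hv by blast
  qed
qed

end
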